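(* Let $(G,\cdot)$ be a loop with identity $e$ and let $(H,\cdot)$ be a non-trivial subloop of $G$ such that $(xs\cdot z)s=x(sz\cdot s)$ for all $x,z\in G$ and $s\in H$. Then $$xs^n=xs^{n-1}\cdot s=xs\cdot s^{n-1}$$ for all $x\in G$, $s\in H$ and $n\in\mathbb{Z}$.
   Context: Juxtaposition binds more tightly than $\cdot$. For $s\in H$, the left and right inverses of $s$ coincide under the hypothesis; denote this common inverse by $s^{-1}$ (so $ss^{-1}=s^{-1}s=e$). Powers of $s\in H$ are defined by $s^0=e$, $s^n=s^{n-1}\cdot s$ for $n>0$, and $s^n=(s^{-1})^{|n|}$ for $n<0$. *)

theory Defs
  imports Main
begin

definition loop :: "'a set \<Rightarrow> ('a \<Rightarrow> 'a \<Rightarrow> 'a) \<Rightarrow> 'a \<Rightarrow> bool" where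
  "loop G m e \<longleftrightarrow>
     e \<in> G \<and>
     (\<forall>x\<in>G. \<forall>y\<in>G. m x y \<in> G) \<and>
     (\<forall>x\<in>G. m e x = x \<and> m x e = x) \<and>
     (\<forall>a\<in>G. \<forall>b\<in>G. \<exists>!x. x \<in> G \<and> m a x = b) \<and>
     (\<forall>a\<in>G. \<forall>b\<in>G. \<exists>!y. y \<in> G \<and> m y a = b)"

definition subloop :: "'a set \<Rightarrow> 'a set \<Rightarrow> ('a \<Rightarrow> 'a \<Rightarrow> 'a) \<Rightarrow> 'a \<Rightarrow> bool" where
  "subloop H G m e \<longleftrightarrow> H \<subseteq> G \<and> loop H m e"

text \<open>The inverse of s (taken as the unique right inverse, s s^-1 = e; under the
hypothesis of the theorem it coincides with the left inverse).\<close>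
definition loop_inv :: "'a set \<Rightarrow> ('a \<Rightarrow> 'a \<Rightarrow> 'a) \<Rightarrow> 'a \<Rightarrow> 'a \<Rightarrow> 'a" where
  "loop_inv G m e s = (THE y. y \<in> G \<and> m s y = e)"

fun loop_npow :: "('a \<Rightarrow> 'a \<Rightarrow> 'a) \<Rightarrow> 'a \<Rightarrow> 'a \<Rightarrow> nat \<Rightarrow> 'a" where
  "loop_npow m e s 0 = e"
| "loop_npow m e s (Suc n) = m (loop_npow m e s n) s"

definition loop_ipow :: "'a set \<Rightarrow> ('a \<Rightarrow> 'a \<Rightarrow> 'a) \<Rightarrow> 'a \<Rightarrow> 'a \<Rightarrow> int \<Rightarrow> 'a" where
  "loop_ipow G m e s n =
     (if 0 \<le> n then loop_npow m e s (nat n)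
      else loop_npow m e (loop_inv G m e s) (nat (- n)))"

end

theory Submission
  imports Defs
begin

lemma loop_e: "loop G m e \<Longrightarrow> e \<in> G"
  unfolding loop_def by (rule conjunct1)
lemma loop_cl: "loop G m e \<Longrightarrow> a \<in> G \<Longrightarrow> b \<in> G \<Longrightarrow> m a b \<in> G"
  unfolding loop_def by (drule conjunct2, drule conjunct1) blast
lemma loop_id: "loop G m e \<Longrightarrow> a \<in> G \<Longrightarrow> m e a = a \<and> m a e = a"
  unfolding loop_def by (drule conjunct2, drule conjunct2, drule conjunct1) blast
lemma loop_rd: "loop G m e \<Longrightarrow> a \<in> G \<Longrightarrow> b \<in> G \<Longrightarrow> \<exists>!y. y \<in> G \<and> m y a = b"
  unfolding loop_def by (drule conjunct2, drule conjunct2, drule conjunct2, drule conjunct2) blast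
lemma loop_ld: "loop G m e \<Longrightarrow> a \<in> G \<Longrightarrow> b \<in> G \<Longrightarrow> \<exists>!y. y \<in> G \<and> m a y = b"
  unfolding loop_def by (drule conjunct2, drule conjunct2, drule conjunct2, drule conjunct1) blast

lemma npow_in:
  assumes "loop G m e" "s \<in> G"
  shows "loop_npow m e s k \<in> G"
  using assms by (induction k) (auto intro: loop_cl loop_e)

lemma rdiv_uniq:
  assumes "loop G m e" "a \<in> G" "y1 \<in> G" "y2 \<in> G" "m y1 a = m y2 a"
  shows "y1 = y2"
proof -
  have "m y1 a \<in> G" using assms loop_cl by metis
  then have "\<exists>!y. y \<in> G \<and> m y a = m y1 a" using assms loop_rd by metis
  then show ?thesis using assms by metis
qed

lemma ldiv_uniq:
  assumes "loop G m e" "a \<in> G" "y1 \<in> G" "y2 \<in> G" "m a y1 = m a y2"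
  shows "y1 = y2"
proof -
  have "m a y1 \<in> G" using assms loop_cl by metis
  then have "\<exists>!y. y \<in> G \<and> m a y = m a y1" using assms loop_ld by metis
  then show ?thesis using assms by metis
qed

lemma BC:
  assumes L: "loop G m e" and sG: "s \<in> G"
    and I: "\<forall>x\<in>G. \<forall>z\<in>G. m (m (m x s) z) s = m x (m (m s z) s)"
  shows "\<forall>x\<in>G. m x (loop_npow m e s (Suc k)) = m (m x (loop_npow m e s k)) s
              \<and> m (m x s) (loop_npow m e s k) = m x (loop_npow m e s (Suc k))"
proof (induction k)
  case 0
  then show ?case using sG loop_id[OF L] loop_cl[OF L] by simp
next
  case (Suc k)
  let ?p = "loop_npow m e s"
  have cl: "\<And>a b. a \<in> G \<Longrightarrow> b \<in> G \<Longrightarrow> m a b \<in> G" and eG: "e \<in> G"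
    and id: "\<And>a. a \<in> G \<Longrightarrow> m e a = a \<and> m a e = a" using loop_cl[OF L] loop_e[OF L] loop_id[OF L] by auto
  have pk: "?p k \<in> G" "?p (Suc k) \<in> G" using npow_in[OF L sG, of k] npow_in[OF L sG, of "Suc k"] by (simp only:)+
  have ss: "m s (?p k) = ?p (Suc k)"
    using Suc[rule_format, OF eG] id[OF sG] id[OF pk(2)] by simp
  have B: "m x (?p (Suc (Suc k))) = m (m x (?p (Suc k))) s" if x: "x \<in> G" for x
  proof -
    have "m (m (m x s) (?p k)) s = m x (m (m s (?p k)) s)" using I x pk by blast
    then show ?thesis using ss Suc[rule_format, OF x] by simp
  qed
  have C: "m (m x s) (?p (Suc k)) = m x (?p (Suc (Suc k)))" if x: "x \<in> G" for x
  proof -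
    have xs: "m x s \<in> G" using cl x sG by blast
    have "m (m x s) (?p (Suc k)) = m (m (m x s) (?p k)) s" using Suc[rule_format, OF xs] by blast
    also have "\<dots> = m (m x (?p (Suc k))) s" using Suc[rule_format, OF x] by simp
    also have "\<dots> = m x (?p (Suc (Suc k)))" using B[OF x] by simp
    finally show ?thesis .
  qed
  show ?case using B C by blast
qed

lemma cancel:
  assumes L: "loop G m e" and sG: "s \<in> G" and uG: "u \<in> G" and su: "m s u = e"
    and I: "\<forall>x\<in>G. \<forall>z\<in>G. m (m (m x s) z) s = m x (m (m s z) s)"
    and x: "x \<in> G"
  shows "m (m x s) u = x"
proof -
  have cl: "\<And>a b. a \<in> G \<Longrightarrow> b \<in> G \<Longrightarrow> m a b \<in> G"
    and id: "\<And>a. a \<in> G \<Longrightarrow> m e a = a \<and> m a e = a" using loop_cl[OF L] loop_e[OF L] loop_id[OF L] by auto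
  have "m (m (m x s) u) s = m x (m (m s u) s)" using I x uG by blast
  also have "\<dots> = m x s" using su id[OF sG] by simp
  finally have eq: "m (m (m x s) u) s = m x s" .
  have "m (m x s) u \<in> G" using cl[OF cl[OF x sG] uG] .
  then show ?thesis using rdiv_uniq[OF L sG _ x eq] by blast
qed

theorem theorem3p2:
  fixes G H :: "'a set" and m :: "'a \<Rightarrow> 'a \<Rightarrow> 'a" and e :: 'a
  assumes "loop G m e"
    and "subloop H G m e"
    and "H \<noteq> {e}"
    and "\<forall>x\<in>G. \<forall>z\<in>G. \<forall>s\<in>H. m (m (m x s) z) s = m x (m (m s z) s)"
  shows "\<forall>x\<in>G. \<forall>s\<in>H. \<forall>n::int.
           m x (loop_ipow G m e s n) = m (m x (loop_ipow G m e s (n - 1))) s \<and>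
           m (m x (loop_ipow G m e s (n - 1))) s = m (m x s) (loop_ipow G m e s (n - 1))"
proof (intro ballI allI)
  fix x s and n :: int
  assume x: "x \<in> G" and sH: "s \<in> H"
  note L = assms(1)
  have HG: "H \<subseteq> G" and LH: "loop H m e" using assms(2) unfolding subloop_def by auto
  have sG: "s \<in> G" using sH HG by blast
  have cl: "\<And>a b. a \<in> G \<Longrightarrow> b \<in> G \<Longrightarrow> m a b \<in> G" and eG: "e \<in> G"
    and id: "\<And>a. a \<in> G \<Longrightarrow> m e a = a \<and> m a e = a"
    and rd: "\<And>a b. a \<in> G \<Longrightarrow> b \<in> G \<Longrightarrow> \<exists>!y. y \<in> G \<and> m y a = b"
    using loop_cl[OF L] loop_e[OF L] loop_id[OF L] loop_rd[OF L] by auto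
  have IH: "\<And>s. s \<in> H \<Longrightarrow> \<forall>x\<in>G. \<forall>z\<in>G. m (m (m x s) z) s = m x (m (m s z) s)"
    using assms(4) by blast
  define t where "t = loop_inv G m e s"
  have eH: "e \<in> H" using loop_e[OF LH] .
  have ldH: "\<forall>a\<in>H. \<forall>b\<in>H. \<exists>!x. x \<in> H \<and> m a x = b"
    using loop_ld[OF LH] by blast
  obtain y where yH: "y \<in> H" and sy: "m s y = e" using ex1_implies_ex[OF ldH[rule_format, OF sH eH]] by blast
  have yG: "y \<in> G" using yH HG by blast
  have "t = y" unfolding t_def loop_inv_def
  proof (rule the_equality)
    show "y \<in> G \<and> m s y = e" using yG sy by blast
    fix z assume "z \<in> G \<and> m s z = e"
    then show "z = y" using ldiv_uniq[OF L sG, of z y] yG sy by simp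
  qed
  then have tH: "t \<in> H" and tG: "t \<in> G" and st: "m s t = e" using yH yG sy by auto
  obtain l where lG: "l \<in> G" and ls: "m l s = e" using ex1_implies_ex[OF rd[OF sG eG]] by blast
  have "m (m (m l s) t) s = m l (m (m s t) s)" using IH[OF sH] lG tG by blast
  then have ts: "m t s = e" using ls st id[OF tG] id[OF sG] by simp
  have canc1: "\<And>x. x \<in> G \<Longrightarrow> m (m x s) t = x"
    using cancel[OF L sG tG st IH[OF sH]] by blast
  have canc2: "\<And>x. x \<in> G \<Longrightarrow> m (m x t) s = x"
    using cancel[OF L tG sG ts IH[OF tH]] by blast
  note BCs = BC[OF L sG IH[OF sH]]
  note BCt = BC[OF L tG IH[OF tH]]
  show "m x (loop_ipow G m e s n) = m (m x (loop_ipow G m e s (n - 1))) s \<and>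
        m (m x (loop_ipow G m e s (n - 1))) s = m (m x s) (loop_ipow G m e s (n - 1))"
  proof (cases "n > 0")
    case True
    define k where "k = nat (n - 1)"
    have n1: "nat n = Suc k" using True unfolding k_def by simp
    have e1: "loop_ipow G m e s n = loop_npow m e s (Suc k)"
      using True n1 unfolding loop_ipow_def by simp
    have e2: "loop_ipow G m e s (n - 1) = loop_npow m e s k"
      using True unfolding loop_ipow_def k_def by simp
    show ?thesis unfolding e1 e2 using BCs[rule_format, OF x] by simp
  next
    case False
    define k where "k = nat (- n)"
    have n1: "nat (- (n - 1)) = Suc k" using False unfolding k_def by simp
    have e1: "loop_ipow G m e s n = loop_npow m e t k"
      using False unfolding loop_ipow_def k_def t_def
      by (cases "n = 0") auto
    have e2: "loop_ipow G m e s (n - 1) = loop_npow m e t (Suc k)"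
      using False n1 unfolding loop_ipow_def t_def by simp
    have pk: "loop_npow m e t k \<in> G" using npow_in[OF L tG] .
    have xt: "m x (loop_npow m e t k) \<in> G" using cl[OF x pk] .
    have xs: "m x s \<in> G" using cl[OF x sG] .
    have g1: "m (m x (loop_npow m e t (Suc k))) s = m x (loop_npow m e t k)"
      using BCt[rule_format, OF x] canc2[OF xt] by simp
    have g2: "m (m x s) (loop_npow m e t (Suc k)) = m x (loop_npow m e t k)"
      using BCt[rule_format, OF xs] canc1[OF x] by simp
    show ?thesis unfolding e1 e2 using g1 g2 by simp
  qed
qed

end
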